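(* Let $M$ be a finitely generated $\mathbb{Z}[\sigma]$-submodule of $\mathbb{Q}[\sigma]$, and let $\tilde M$ be the union of all $\mathbb{Z}[\sigma]$-submodules $N$ of $\mathbb{Q}[\sigma]$ with $M\subseteq N$ and $N/M$ finite. Then $\tilde M$ is generated by one element as a $\mathbb{Z}[\sigma]$-module.
   Context: $\mathbb{Q}[\sigma]$ is the polynomial ring over $\mathbb{Q}$ in an indeterminate $\sigma$, viewed as a module over $\mathbb{Z}[\sigma]$ by multiplication. *)

theory Defs
  imports "HOL-Computational_Algebra.Polynomial"
begin

text \<open>Q[sigma] is rat poly; Z[sigma] is the image of int poly in it.\<close>
definition intpolys :: "rat poly set" where
  "intpolys = range (map_poly rat_of_int)"

definition zsubmodule :: "rat poly set \<Rightarrow> bool" where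
  "zsubmodule N \<longleftrightarrow> 0 \<in> N \<and> (\<forall>x\<in>N. \<forall>y\<in>N. x + y \<in> N)
      \<and> (\<forall>a\<in>intpolys. \<forall>x\<in>N. a * x \<in> N)"

definition zspan :: "rat poly set \<Rightarrow> rat poly set" where
  "zspan S = {x. \<exists>f. (\<forall>s\<in>S. f s \<in> intpolys) \<and> x = (\<Sum>s\<in>S. f s * s)}"

definition zfin_gen :: "rat poly set \<Rightarrow> bool" where
  "zfin_gen M \<longleftrightarrow> (\<exists>S. finite S \<and> M = zspan S)"

definition finite_quot :: "rat poly set \<Rightarrow> rat poly set \<Rightarrow> bool" where
  "finite_quot N M \<longleftrightarrow> finite ((\<lambda>x. (\<lambda>m. x + m) ` M) ` N)"

definition saturation :: "rat poly set \<Rightarrow> rat poly set" where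
  "saturation M = \<Union>{N. zsubmodule N \<and> M \<subseteq> N \<and> finite_quot N M}"

end

theory Submission
  imports Defs "HOL-Computational_Algebra.Computational_Algebra" "HOL-Computational_Algebra.Field_as_Ring"
begin

abbreviation ip :: "int poly \<Rightarrow> rat poly" where "ip \<equiv> map_poly rat_of_int"

lemma ip_add: "ip (a + b) = ip a + ip b"
  by (rule poly_eqI) (simp add: coeff_map_poly)
lemma ip_diff: "ip (a - b) = ip a - ip b"
  by (rule poly_eqI) (simp add: coeff_map_poly)
lemma ip_uminus: "ip (- b) = - ip b"
  by (rule poly_eqI) (simp add: coeff_map_poly)
lemma ip_mult: "ip (a * b) = ip a * ip b"
  by (rule poly_eqI) (simp add: coeff_map_poly coeff_mult of_int_sum)
lemma ip_smult: "ip (smult c b) = smult (of_int c) (ip b)"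
  by (rule poly_eqI) (simp add: coeff_map_poly)
lemma ip_const: "ip [:c:] = [:of_int c:]"
  by (rule poly_eqI) (simp add: coeff_map_poly coeff_pCons split: nat.splits)
lemma ip_monom: "ip (monom c n) = monom (of_int c) n"
  by (simp add: map_poly_monom)
lemma ip_sum: "ip (\<Sum>s\<in>S. f s) = (\<Sum>s\<in>S. ip (f s))"
  by (induction S rule: infinite_finite_induct) (simp_all add: ip_add)
lemma ip_inj: "ip a = ip b \<Longrightarrow> a = b"
  by (rule poly_eqI) (metis coeff_map_poly of_int_0 of_int_eq_iff)

lemma ip_in [simp]: "ip q \<in> intpolys"
  by (simp add: intpolys_def)

lemma fl_ip: assumes "\<forall>k. coeff p k \<in> \<int>" shows "ip (map_poly floor p) = p"
proof (rule poly_eqI)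
  fix n
  obtain z where "coeff p n = of_int z" using assms by (meson Ints_cases)
  then show "coeff (ip (map_poly floor p)) n = coeff p n" by (simp add: coeff_map_poly)
qed

lemma intpolys_iff: "p \<in> intpolys \<longleftrightarrow> (\<forall>k. coeff p k \<in> \<int>)"
proof
  assume "p \<in> intpolys" then obtain q where "p = ip q" by (auto simp: intpolys_def)
  then show "\<forall>k. coeff p k \<in> \<int>" by (simp add: coeff_map_poly)
next
  assume "\<forall>k. coeff p k \<in> \<int>"
  then have "p = ip (map_poly floor p)" by (simp add: fl_ip)
  then show "p \<in> intpolys" by (metis ip_in)
qed

lemma intpolysE: "p \<in> intpolys \<Longrightarrow> (\<And>q. p = ip q \<Longrightarrow> P) \<Longrightarrow> P"
  by (auto simp: intpolys_def)

lemma ip_add_in: "a \<in> intpolys \<Longrightarrow> b \<in> intpolys \<Longrightarrow> a + b \<in> intpolys"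
  by (metis intpolysE ip_add ip_in)
lemma ip_diff_in: "a \<in> intpolys \<Longrightarrow> b \<in> intpolys \<Longrightarrow> a - b \<in> intpolys"
  by (metis intpolysE ip_diff ip_in)
lemma ip_mult_in: "a \<in> intpolys \<Longrightarrow> b \<in> intpolys \<Longrightarrow> a * b \<in> intpolys"
  by (metis intpolysE ip_mult ip_in)
lemma zero_in [simp]: "0 \<in> intpolys" by (metis ip_in map_poly_0)
lemma ip_sum_in: "(\<And>s. s \<in> S \<Longrightarrow> f s \<in> intpolys) \<Longrightarrow> (\<Sum>s\<in>S. f s) \<in> intpolys"
  by (induction S rule: infinite_finite_induct) (auto simp: ip_add_in)
lemma ip_const_in: "[:of_int c:] \<in> intpolys"
  by (metis ip_const ip_in)
lemma ip_monom_in: "c \<in> \<int> \<Longrightarrow> monom c n \<in> intpolys"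
  by (metis Ints_cases ip_monom ip_in)
lemma ip_smult_in: "a \<in> intpolys \<Longrightarrow> smult (of_int c) a \<in> intpolys"
  by (metis intpolysE ip_smult ip_in)

lemma zsub_neg: assumes "zsubmodule N" "x \<in> N" shows "- x \<in> N"
proof -
  have "[:-1:] * x \<in> N" using assms ip_const_in[of "-1"] unfolding zsubmodule_def by auto
  then show ?thesis by simp
qed
lemma zsub_diff: assumes "zsubmodule N" "x \<in> N" "y \<in> N" shows "x - y \<in> N"
  using zsub_neg[OF assms(1,3)] assms unfolding zsubmodule_def
  by (metis diff_conv_add_uminus)
lemma zsub_add: "zsubmodule N \<Longrightarrow> x \<in> N \<Longrightarrow> y \<in> N \<Longrightarrow> x + y \<in> N"
  unfolding zsubmodule_def by auto
lemma zsub_mult: "zsubmodule N \<Longrightarrow> a \<in> intpolys \<Longrightarrow> x \<in> N \<Longrightarrow> a * x \<in> N"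
  unfolding zsubmodule_def by auto
lemma zsub_0: "zsubmodule N \<Longrightarrow> 0 \<in> N"
  unfolding zsubmodule_def by auto

lemma cover_fq:
  assumes M: "zsubmodule M" and R: "finite R" and cov: "\<forall>x\<in>N. \<exists>r\<in>R. x - r \<in> M"
  shows "finite_quot N M"
proof -
  have "(\<lambda>x. (\<lambda>m. x + m) ` M) ` N \<subseteq> (\<lambda>r. (\<lambda>m. r + m) ` M) ` R"
  proof
    fix C assume "C \<in> (\<lambda>x. (\<lambda>m. x + m) ` M) ` N"
    then obtain x where x: "x \<in> N" "C = (\<lambda>m. x + m) ` M" by auto
    then obtain r where r: "r \<in> R" "x - r \<in> M" using cov by auto
    have "(\<lambda>m. x + m) ` M = (\<lambda>m. r + m) ` M"
    proof (intro set_eqI iffI)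
      fix z assume "z \<in> (\<lambda>m. x + m) ` M"
      then obtain m where "m \<in> M" "z = x + m" by auto
      then show "z \<in> (\<lambda>m. r + m) ` M"
        using zsub_add[OF M r(2) \<open>m \<in> M\<close>] by (intro image_eqI[of _ _ "x - r + m"]) auto
    next
      fix z assume "z \<in> (\<lambda>m. r + m) ` M"
      then obtain m where "m \<in> M" "z = r + m" by auto
      then show "z \<in> (\<lambda>m. x + m) ` M"
        using zsub_diff[OF M \<open>m \<in> M\<close> r(2)] by (intro image_eqI[of _ _ "m - (x - r)"]) auto
    qed
    then show "C \<in> (\<lambda>r. (\<lambda>m. r + m) ` M) ` R" using x r by auto
  qed
  from finite_subset[OF this finite_imageI[OF R]] show ?thesis unfolding finite_quot_def .
qed

lemma pigeon:
  fixes f :: "nat \<Rightarrow> rat poly"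
  assumes M: "zsubmodule M" and fq: "finite_quot N M" and f: "\<And>j. f j \<in> N"
  shows "\<exists>i j. i < j \<and> f j - f i \<in> M"
proof -
  define h where "h j = (\<lambda>m. f j + m) ` M" for j
  have "range h \<subseteq> (\<lambda>x. (\<lambda>m. x + m) ` M) ` N" using f by (auto simp: h_def)
  from finite_subset[OF this] have "finite (range h)" using fq unfolding finite_quot_def .
  then have "\<not> inj h" using finite_imageD[of h UNIV] infinite_UNIV_nat by metis
  then obtain i j where ij: "i \<noteq> j" "h i = h j" unfolding inj_def by blast
  have key: "f b - f a \<in> M" if "h a = h b" for a b
  proof -
    have "f b \<in> h b" using zsub_0[OF M] by (auto simp: h_def intro: image_eqI[of _ _ 0])
    then have "f b \<in> h a" using that by simp
    then obtain m where "m \<in> M" "f b = f a + m" by (auto simp: h_def)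
    then show ?thesis by simp
  qed
  show ?thesis
  proof (cases "i < j")
    case True then show ?thesis using key[OF ij(2)] by blast
  next
    case False then have "j < i" using ij by simp
    then show ?thesis using key[of j i] ij(2) by metis
  qed
qed


lemma monic_int_div:
  assumes P: "lead_coeff P = 1" "P \<in> intpolys"
  shows "P * y \<in> intpolys \<Longrightarrow> y \<in> intpolys"
proof (induction "degree y" arbitrary: y rule: less_induct)
  case less
  show ?case
  proof (cases "y = 0")
    case True then show ?thesis by simp
  next
    case False
    have "coeff (P * y) (degree P + degree y) = lead_coeff y"
      using coeff_mult_degree_sum[of P y] P by simp
    then have ly: "lead_coeff y \<in> \<int>" using less.prems intpolys_iff by metis
    define y' where "y' = y - monom (lead_coeff y) (degree y)"
    have mi: "monom (lead_coeff y) (degree y) \<in> intpolys" using ly by (rule ip_monom_in)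
    have "P * y' = P * y - P * monom (lead_coeff y) (degree y)" by (simp add: y'_def algebra_simps)
    then have Py': "P * y' \<in> intpolys" using less.prems mi P ip_mult_in ip_diff_in by metis
    show ?thesis
    proof (cases "degree y = 0")
      case True
      then have "y = monom (lead_coeff y) (degree y)"
        by (metis degree_0_id monom_0)
      then show ?thesis using mi by metis
    next
      case False
      have c0: "coeff y' (degree y) = 0" by (simp add: y'_def)
      have dle: "degree y' \<le> degree y"
        unfolding y'_def by (intro degree_diff_le) (auto intro: degree_monom_le)
      have "degree y' < degree y"
      proof (cases "y' = 0")
        case True then show ?thesis using False by simp
      next
        case nz: False
        then have "coeff y' (degree y') \<noteq> 0" by simp
        then show ?thesis using c0 dle le_neq_implies_less by metis
      qed
      then have "y' \<in> intpolys" using less.hyps Py' by blast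
      then have "y' + monom (lead_coeff y) (degree y) \<in> intpolys" using mi ip_add_in by blast
      then show ?thesis by (simp add: y'_def)
    qed
  qed
qed

lemma fp_step:
  fixes f :: "int poly" and p :: int
  assumes p: "prime p" and fk: "\<not> p dvd coeff f k"
  shows "\<exists>R. finite R \<and> (\<forall>x. \<exists>r\<in>R. \<exists>q a. x - r = q * f + smult p a)"
proof -
  have p0: "p > 0" using p prime_gt_0_int by blast
  define F1 where "F1 = map_poly (\<lambda>c. c mod p) f"
  define A1 where "A1 = map_poly (\<lambda>c. c div p) f"
  have fF1: "f = F1 + smult p A1"
    by (rule poly_eqI) (simp add: F1_def A1_def coeff_map_poly)
  have "coeff F1 k \<noteq> 0" using fk by (simp add: F1_def coeff_map_poly dvd_eq_mod_eq_0)
  then have F10: "F1 \<noteq> 0" by auto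
  define c where "c = lead_coeff F1"
  define d where "d = degree F1"
  have "c = coeff f d mod p" by (simp add: c_def d_def F1_def coeff_map_poly)
  moreover have "c \<noteq> 0" using F10 by (simp add: c_def)
  ultimately have "\<not> p dvd c" using p0
    by (metis dvd_eq_mod_eq_0 mod_mod_trivial)
  then have "coprime p c" using prime_imp_coprime[OF p] by blast
  then obtain u v where uv: "u * c + v * p = 1"
    by (metis bezout_int coprime_iff_gcd_eq_1 gcd.commute)
  define F2 where "F2 = smult u F1 + monom (v * p) d"
  have dF2: "degree F2 \<le> d" unfolding F2_def
    by (metis d_def degree_add_le degree_monom_le degree_smult_le)
  have cF2: "coeff F2 d = 1" using uv by (simp add: F2_def c_def d_def coeff_monom)
  then have degF2: "degree F2 = d" using dF2 by (simp add: le_antisym le_degree)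
  then have monic: "lead_coeff F2 = 1" using cF2 by simp
  then have F20: "F2 \<noteq> 0" by auto
  define A2 where "A2 = monom v d - smult u A1"
  have F2eq: "F2 = smult u f + smult p A2"
    unfolding F2_def A2_def fF1 by (simp add: smult_add_right smult_diff_right smult_monom algebra_simps)
  define R where "R = {r::int poly. (\<forall>k\<ge>d. coeff r k = 0) \<and> (\<forall>k. coeff r k \<in> {0..<p})}"
  have "R \<subseteq> Poly ` {xs. set xs \<subseteq> {0..<p} \<and> length xs = d}"
  proof
    fix r assume r: "r \<in> R"
    have "r = Poly (map (coeff r) [0..<d])"
    proof (rule poly_eqI)
      fix n show "coeff r n = coeff (Poly (map (coeff r) [0..<d])) n"
        using r by (cases "n < d") (auto simp: R_def nth_default_def)
    qed
    moreover have "set (map (coeff r) [0..<d]) \<subseteq> {0..<p}" using r by (auto simp: R_def)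
    ultimately show "r \<in> Poly ` {xs. set xs \<subseteq> {0..<p} \<and> length xs = d}" by force
  qed
  then have finR: "finite R"
    by (rule finite_subset[OF _ finite_imageI[OF finite_lists_length_eq[OF finite_atLeastLessThan_int]]])
  have "\<exists>r\<in>R. \<exists>q a. x - r = q * f + smult p a" for x
  proof -
    obtain q r where qr: "pseudo_divmod x F2 = (q, r)" by fastforce
    from pseudo_divmod[OF F20 qr] monic
    have xe: "x = F2 * q + r" and rd: "r = 0 \<or> degree r < d" by (simp_all add: degF2)
    define r' where "r' = map_poly (\<lambda>c. c mod p) r"
    define B where "B = map_poly (\<lambda>c. c div p) r"
    have rr: "r = r' + smult p B"
      by (rule poly_eqI) (simp add: r'_def B_def coeff_map_poly)
    have "r' \<in> R"
    proof -
      have "coeff r k = 0" if "k \<ge> d" for k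
        using rd that by (cases "r = 0") (auto intro!: coeff_eq_0)
      then show ?thesis using p0 by (auto simp: R_def r'_def coeff_map_poly)
    qed
    moreover have "x - r' = (smult u q) * f + smult p (A2 * q + B)"
      unfolding xe rr F2eq by (simp add: algebra_simps smult_add_right)
    ultimately show ?thesis by blast
  qed
  then show ?thesis using finR by blast
qed


definition iideal :: "int poly set \<Rightarrow> bool" where
  "iideal I \<longleftrightarrow> 0 \<in> I \<and> (\<forall>x\<in>I. \<forall>y\<in>I. x + y \<in> I) \<and> (\<forall>a. \<forall>x\<in>I. a * x \<in> I)"

lemma finite_index_aux:
  "\<forall>I. iideal I \<and> [:int n:] \<in> I \<and> n > 0 \<and> (\<forall>p. prime p \<longrightarrow> (\<exists>f\<in>I. \<exists>k. \<not> p dvd coeff f k))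
     \<longrightarrow> (\<exists>R. finite R \<and> (\<forall>x. \<exists>r\<in>R. x - r \<in> I))"
proof (induction n rule: less_induct)
  case (less n)
  show ?case
  proof (intro allI impI)
    fix I assume H: "iideal I \<and> [:int n:] \<in> I \<and> n > 0 \<and> (\<forall>p. prime p \<longrightarrow> (\<exists>f\<in>I. \<exists>k. \<not> p dvd coeff f k))"
    then have I: "iideal I" and nI: "[:int n:] \<in> I" and n0: "n > 0"
      and pr: "\<And>p. prime p \<Longrightarrow> \<exists>f\<in>I. \<exists>k. \<not> p dvd coeff f k" by auto
    show "\<exists>R. finite R \<and> (\<forall>x. \<exists>r\<in>R. x - r \<in> I)"
    proof (cases "n = 1")
      case True
      have "x - 0 \<in> I" for x
      proof -
        have "x * [:int n:] \<in> I" using I nI unfolding iideal_def by blast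
        then show ?thesis using True by simp
      qed
      then show ?thesis by blast
    next
      case False
      then obtain p :: nat where p: "prime p" "p dvd n" using prime_factor_nat by blast
      then obtain m where nm: "n = p * m" by (auto simp: dvd_def)
      have p1: "p > 1" using p(1) prime_gt_1_nat by blast
      then have m0: "m > 0" and mn: "m < n" using n0 nm by auto
      define I' where "I' = {x. smult (int p) x \<in> I}"
      have I'i: "iideal I'" using I unfolding iideal_def I'_def
        by (auto simp: smult_add_right) (metis mult_smult_right)
      have sub: "I \<subseteq> I'"
      proof
        fix x assume "x \<in> I"
        then have "[:int p:] * x \<in> I" using I unfolding iideal_def by blast
        then show "x \<in> I'" by (simp add: I'_def)
      qed
      have mI': "[:int m:] \<in> I'" using nI nm by (simp add: I'_def)
      have pr': "\<forall>q. prime q \<longrightarrow> (\<exists>f\<in>I'. \<exists>k. \<not> q dvd coeff f k)"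
        using pr sub by blast
      have "\<exists>R. finite R \<and> (\<forall>x. \<exists>r\<in>R. x - r \<in> I')"
        using less.IH[OF mn, rule_format, of I'] I'i mI' m0 pr' by simp
      then obtain R' where R': "finite R'" "\<forall>x. \<exists>r\<in>R'. x - r \<in> I'" by blast
      obtain f k where f: "f \<in> I" "\<not> int p dvd coeff f k" using pr[of "int p"] p(1) by auto
      obtain R1 where R1: "finite R1" "\<forall>x. \<exists>r\<in>R1. \<exists>q a. x - r = q * f + smult (int p) a"
        using fp_step[of "int p" f k] p(1) f(2) by auto
      define R where "R = (\<lambda>(r, r'). r + smult (int p) r') ` (R1 \<times> R')"
      have "finite R" using R1(1) R'(1) by (simp add: R_def)
      moreover have "\<exists>r\<in>R. x - r \<in> I" for x
      proof -
        obtain r q a where r: "r \<in> R1" "x - r = q * f + smult (int p) a" using R1(2) by blast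
        obtain r' where r': "r' \<in> R'" "a - r' \<in> I'" using R'(2) by blast
        have "q * f \<in> I" using I f(1) unfolding iideal_def by blast
        moreover have "smult (int p) (a - r') \<in> I" using r'(2) by (simp add: I'_def)
        ultimately have "q * f + smult (int p) (a - r') \<in> I" using I unfolding iideal_def by blast
        moreover have "x - (r + smult (int p) r') = q * f + smult (int p) (a - r')"
          using r(2) by (simp add: algebra_simps smult_diff_right)
        moreover have "r + smult (int p) r' \<in> R" using r(1) r'(1) by (force simp: R_def)
        ultimately show ?thesis by metis
      qed
      ultimately show ?thesis by blast
    qed
  qed
qed


lemma denom1: "\<exists>e::int. e > 0 \<and> smult (of_int e) p \<in> intpolys"
proof -
  define d where "d k = snd (quotient_of (coeff p k))" for k
  define e where "e = (\<Prod>k\<in>{..degree p}. d k)"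
  have dpos: "d k > 0" for k unfolding d_def using quotient_of_denom_pos' by blast
  have "e > 0" unfolding e_def using dpos by (simp add: prod_pos)
  moreover have "coeff (smult (of_int e) p) k \<in> \<int>" for k
  proof (cases "k \<le> degree p")
    case False then show ?thesis by (simp add: coeff_eq_0)
  next
    case True
    then have "e = d k * (\<Prod>j\<in>{..degree p} - {k}. d j)"
      unfolding e_def by (simp add: prod.remove)
    moreover obtain a where "quotient_of (coeff p k) = (a, d k)"
      unfolding d_def by (metis prod.collapse)
    then have "coeff p k = of_int a / of_int (d k)" by (simp add: quotient_of_div)
    ultimately have "coeff (smult (of_int e) p) k = of_int (a * (\<Prod>j\<in>{..degree p} - {k}. d j))"
      using dpos[of k] by (simp add: field_simps)
    then show ?thesis by (metis Ints_of_int)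
  qed
  ultimately show ?thesis by (auto simp: intpolys_iff)
qed

lemma denom: "finite T \<Longrightarrow> \<exists>e::int. e > 0 \<and> (\<forall>t\<in>T. smult (of_int e) t \<in> intpolys)"
proof (induction T rule: finite_induct)
  case empty then show ?case by (intro exI[of _ 1]) simp
next
  case (insert t T)
  obtain e1 where e1: "e1 > 0" "smult (of_int e1) t \<in> intpolys" using denom1 by blast
  obtain e2 where e2: "e2 > 0" "\<forall>t\<in>T. smult (of_int e2) t \<in> intpolys" using insert.IH by blast
  have "smult (of_int (e1 * e2)) t \<in> intpolys"
    using ip_smult_in[OF e1(2), of e2] by (simp add: mult.commute)
  moreover have "smult (of_int (e1 * e2)) s \<in> intpolys" if "s \<in> T" for s
    using ip_smult_in[of "smult (of_int e2) s" e1] e2(2) that by simp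
  ultimately show ?case using e1 e2 by (intro exI[of _ "e1 * e2"]) (auto simp: zero_less_mult_iff)
qed

lemma gcd_comb:
  fixes S :: "rat poly set"
  shows "finite S \<Longrightarrow> \<exists>a. (\<Sum>s\<in>S. a s * s) = Gcd S"
proof (induction S rule: finite_induct)
  case empty then show ?case by simp
next
  case (insert x F)
  obtain a where a: "(\<Sum>s\<in>F. a s * s) = Gcd F" using insert.IH by blast
  define \<alpha> where "\<alpha> = fst (bezout_coefficients x (Gcd F))"
  define \<beta> where "\<beta> = snd (bezout_coefficients x (Gcd F))"
  have ab: "\<alpha> * x + \<beta> * Gcd F = gcd x (Gcd F)"
    unfolding \<alpha>_def \<beta>_def by (rule bezout_coefficients_fst_snd)
  define a' where "a' s = (if s = x then \<alpha> else \<beta> * a s)" for s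
  have "(\<Sum>s\<in>insert x F. a' s * s) = \<alpha> * x + (\<Sum>s\<in>F. \<beta> * a s * s)"
    using insert.hyps by (simp add: a'_def) (intro sum.cong, auto)
  also have "\<dots> = \<alpha> * x + \<beta> * Gcd F" by (simp add: a[symmetric] sum_distrib_left mult.assoc)
  also have "\<dots> = Gcd (insert x F)" using ab by simp
  finally show ?case by blast
qed

lemma zspan_single: "zspan {g} = {x. \<exists>f\<in>intpolys. x = f * g}"
proof (intro set_eqI iffI)
  fix x assume "x \<in> zspan {g}"
  then obtain f where "f g \<in> intpolys" "x = f g * g" unfolding zspan_def by auto
  then show "x \<in> {x. \<exists>f\<in>intpolys. x = f * g}" by blast
next
  fix x assume "x \<in> {x. \<exists>f\<in>intpolys. x = f * g}"
  then obtain f where "f \<in> intpolys" "x = f * g" by blast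
  then show "x \<in> zspan {g}" unfolding zspan_def by (intro CollectI exI[of _ "\<lambda>_. f"]) simp
qed

lemma zsub_single: "zsubmodule (zspan {g})"
proof -
  have "0 \<in> zspan {g}" unfolding zspan_single by (intro CollectI bexI[of _ 0]) auto
  moreover have "x + y \<in> zspan {g}" if xy: "x \<in> zspan {g}" "y \<in> zspan {g}" for x y
  proof -
    obtain f1 f2 where "f1 \<in> intpolys" "f2 \<in> intpolys" "x = f1 * g" "y = f2 * g"
      using xy unfolding zspan_single by blast
    then show ?thesis unfolding zspan_single
      by (intro CollectI bexI[of _ "f1 + f2"]) (auto simp: distrib_right ip_add_in)
  qed
  moreover have "a * x \<in> zspan {g}" if ax: "a \<in> intpolys" "x \<in> zspan {g}" for a x
  proof -
    obtain f1 where "f1 \<in> intpolys" "x = f1 * g"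
      using ax unfolding zspan_single by blast
    then show ?thesis unfolding zspan_single using ax(1)
      by (intro CollectI bexI[of _ "a * f1"]) (auto simp: mult.assoc ip_mult_in)
  qed
  ultimately show ?thesis unfolding zsubmodule_def by blast
qed


lemma smult_sum2: "smult c (\<Sum>i\<in>S. f i) = (\<Sum>i\<in>S. smult c (f i))"
  by (induction S rule: infinite_finite_induct) (simp_all add: smult_add_right)

theorem lemma7p6:
  fixes M :: "rat poly set"
  assumes "zsubmodule M" and "zfin_gen M"
  shows "\<exists>g. saturation M = zspan {g}"
proof -
  have Mz: "zsubmodule M" by fact
  obtain S where S: "finite S" "M = zspan S" using assms(2) zfin_gen_def by auto
  have sat_sup: "N \<subseteq> saturation M" if "zsubmodule N" "M \<subseteq> N" "finite_quot N M" for N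
    using that unfolding saturation_def by blast
  have MM: "finite_quot M M"
    by (rule cover_fq[OF Mz, of "{0}"]) auto
  have Msat: "M \<subseteq> saturation M" using sat_sup[OF Mz _ MM] by blast
  have intmult: "\<exists>k::nat. k > 0 \<and> smult (of_nat k) x \<in> M" if xsat: "x \<in> saturation M" for x
  proof -
    obtain N where N: "zsubmodule N" "M \<subseteq> N" "finite_quot N M" "x \<in> N"
      using xsat unfolding saturation_def by blast
    have "smult (of_nat j) x \<in> N" for j :: nat
      using zsub_mult[OF N(1) ip_const_in[of "int j"] N(4)] by simp
    then obtain i j where ij: "i < j" "smult (of_nat j) x - smult (of_nat i) x \<in> M"
      using pigeon[OF Mz N(3), of "\<lambda>j. smult (of_nat j) x"] by blast
    have "smult (of_nat (j - i)) x = smult (of_nat j) x - smult (of_nat i) x"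
      using ij(1) by (simp add: of_nat_diff smult_diff_left)
    then show ?thesis using ij by (intro exI[of _ "j - i"]) auto
  qed
  have monmult: "\<exists>i j. i < j \<and> (monom 1 j - monom 1 i) * x \<in> M" if xsat: "x \<in> saturation M" for x
  proof -
    obtain N where N: "zsubmodule N" "M \<subseteq> N" "finite_quot N M" "x \<in> N"
      using xsat unfolding saturation_def by blast
    have "monom 1 j * x \<in> N" for j :: nat
      using zsub_mult[OF N(1) ip_monom_in[of 1 j] N(4)] by simp
    then obtain i j where ij: "i < j" "monom 1 j * x - monom 1 i * x \<in> M"
      using pigeon[OF Mz N(3), of "\<lambda>j. monom 1 j * x"] by blast
    then show ?thesis by (intro exI[of _ i] exI[of _ j]) (simp add: algebra_simps)
  qed
  show ?thesis
  proof (cases "\<forall>s\<in>S. s = 0")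
    case True
    have M0: "M \<subseteq> {0}"
    proof
      fix x assume "x \<in> M"
      then obtain f where "x = (\<Sum>s\<in>S. f s * s)" unfolding S(2) zspan_def by blast
      then show "x \<in> {0}" using True by (simp add: sum.neutral)
    qed
    have "saturation M = zspan {0}"
    proof
      show "saturation M \<subseteq> zspan {0}"
      proof
        fix x assume "x \<in> saturation M"
        then obtain k :: nat where "k > 0" "smult (of_nat k) x \<in> M" using intmult by blast
        then have "x = 0" using M0 by auto
        then show "x \<in> zspan {0}" unfolding zspan_single by (intro CollectI bexI[of _ 0]) auto
      qed
    next
      show "zspan {0} \<subseteq> saturation M"
        using Msat zsub_0[OF Mz] unfolding zspan_single by auto
    qed
    then show ?thesis by blast
  next
    case False
    then obtain s0 where s0: "s0 \<in> S" "s0 \<noteq> 0" by blast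
    define G where "G = Gcd S"
    have G0: "G \<noteq> 0" using s0 by (auto simp: G_def Gcd_0_iff)
    obtain a where a: "(\<Sum>s\<in>S. a s * s) = G" using gcd_comb[OF S(1)] G_def by blast
    define v where "v s = s div G" for s
    have sv: "s = G * v s" if "s \<in> S" for s
      using that by (simp add: v_def G_def Gcd_dvd)
    have "G * (\<Sum>s\<in>S. a s * v s) = (\<Sum>s\<in>S. a s * s)"
      by (simp add: sum_distrib_left) (intro sum.cong, simp_all add: sv[symmetric] algebra_simps)
    then have "G * (\<Sum>s\<in>S. a s * v s) = G * 1" using a by simp
    then have av: "(\<Sum>s\<in>S. a s * v s) = 1" using G0 by (simp only: mult_cancel_left) simp
    obtain e :: int where e: "e > 0" "\<forall>t\<in>v ` S \<union> a ` S. smult (of_int e) t \<in> intpolys"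
      using denom[of "v ` S \<union> a ` S"] S(1) by blast
    define Wi where "Wi s = map_poly floor (smult (of_int e) (v s))" for s
    define Ai where "Ai s = map_poly floor (smult (of_int e) (a s))" for s
    have Wi: "ip (Wi s) = smult (of_int e) (v s)" if "s \<in> S" for s
      unfolding Wi_def using e(2) that by (intro fl_ip) (auto simp: intpolys_iff)
    have Ai: "ip (Ai s) = smult (of_int e) (a s)" if "s \<in> S" for s
      unfolding Ai_def using e(2) that by (intro fl_ip) (auto simp: intpolys_iff)
    have "ip (\<Sum>s\<in>S. Ai s * Wi s) = (\<Sum>s\<in>S. smult (of_int e * of_int e) (a s * v s))"
      unfolding ip_sum by (intro sum.cong) (simp_all add: ip_mult Ai Wi)
    also have "\<dots> = smult (of_int e * of_int e) 1" by (simp add: smult_sum2[symmetric] av)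
    also have "\<dots> = ip [:e * e:]" by (simp add: ip_const)
    finally have sumAW: "(\<Sum>s\<in>S. Ai s * Wi s) = [:e * e:]" by (rule ip_inj)
    define C where "C = {coeff (Wi s) k | s k. s \<in> S}"
    define c where "c = Gcd C"
    have c0: "c \<noteq> 0"
    proof
      assume "c = 0"
      then have "C \<subseteq> {0}" by (simp add: c_def Gcd_0_iff)
      then have "Wi s = 0" if "s \<in> S" for s using that by (intro poly_eqI) (auto simp: C_def)
      then have "(\<Sum>s\<in>S. Ai s * Wi s) = 0" by simp
      then show False using sumAW e(1) by simp
    qed
    define Ui where "Ui s = map_poly (\<lambda>z. z div c) (Wi s)" for s
    have WU: "Wi s = smult c (Ui s)" if "s \<in> S" for s
    proof (rule poly_eqI)
      fix k
      have "c dvd coeff (Wi s) k" unfolding c_def using that by (intro Gcd_dvd) (auto simp: C_def)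
      then show "coeff (Wi s) k = coeff (smult c (Ui s)) k" by (simp add: Ui_def coeff_map_poly)
    qed
    define g where "g = smult (of_int c / of_int e) G"
    have g0: "g \<noteq> 0" using G0 c0 e(1) by (simp add: g_def)
    have sg: "s = g * ip (Ui s)" if "s \<in> S" for s
    proof -
      have "smult (of_int e) (v s) = smult (of_int c) (ip (Ui s))"
        using Wi[OF that] WU[OF that] by (simp add: ip_smult)
      note eq = this
      have "v s = smult (1 / of_int e) (smult (of_int e) (v s))" using e(1) by simp
      also have "\<dots> = smult (1 / of_int e) (smult (of_int c) (ip (Ui s)))" using eq by simp
      also have "\<dots> = smult (of_int c / of_int e) (ip (Ui s))" by simp
      finally have "v s = smult (of_int c / of_int e) (ip (Ui s))" .
      then show ?thesis using sv[OF that] by (simp add: g_def mult_smult_right mult_smult_left)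
    qed
    define I where "I = {y. \<exists>F. y = (\<Sum>s\<in>S. F s * Ui s)}"
    have I: "iideal I" unfolding iideal_def
    proof (intro conjI ballI allI)
      show "0 \<in> I" unfolding I_def by (intro CollectI exI[of _ "\<lambda>_. 0"]) simp
    next
      fix x y assume "x \<in> I" "y \<in> I"
      then obtain F1 F2 where "x = (\<Sum>s\<in>S. F1 s * Ui s)" "y = (\<Sum>s\<in>S. F2 s * Ui s)"
        unfolding I_def by blast
      then show "x + y \<in> I" unfolding I_def
        by (intro CollectI exI[of _ "\<lambda>s. F1 s + F2 s"]) (simp add: sum.distrib distrib_right)
    next
      fix b x assume "x \<in> I"
      then obtain F1 where "x = (\<Sum>s\<in>S. F1 s * Ui s)" unfolding I_def by blast
      then show "b * x \<in> I" unfolding I_def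
        by (intro CollectI exI[of _ "\<lambda>s. b * F1 s"]) (simp add: sum_distrib_left mult.assoc)
    qed
    have Uin: "Ui s \<in> I" if "s \<in> S" for s
    proof -
      have "(\<Sum>t\<in>S. (if t = s then 1 else 0) * Ui t) = (\<Sum>t\<in>S. if t = s then Ui t else 0)"
        by (intro sum.cong) auto
      also have "\<dots> = Ui s" using S(1) that by (simp add: sum.delta)
      finally have "(\<Sum>t\<in>S. (if t = s then 1 else 0) * Ui t) = Ui s" .
      then show ?thesis unfolding I_def by (intro CollectI exI[of _ "\<lambda>t. if t = s then 1 else 0"]) simp
    qed
    have nconst: "\<exists>n. [:int n:] \<in> I \<and> n > 0"
    proof -
      define X where "X = (\<Sum>s\<in>S. Ai s * Ui s)"
      have XI: "X \<in> I" unfolding I_def X_def by blast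
      have "smult c X = (\<Sum>s\<in>S. Ai s * Wi s)"
        unfolding X_def smult_sum2 by (intro sum.cong) (simp_all add: WU)
      then have cX: "smult c X = [:e * e:]" using sumAW by simp
      then have "degree X = 0" using c0 by (metis degree_pCons_0 degree_smult_eq)
      then have Xc: "X = [:coeff X 0:]" by (metis degree_0_id)
      then have "c * coeff X 0 = e * e" using cX by (metis coeff_pCons_0 coeff_smult)
      then have x0: "coeff X 0 \<noteq> 0" using e(1) by auto
      have "[:sgn (coeff X 0):] * X \<in> I" using I XI unfolding iideal_def by blast
      moreover have "[:sgn (coeff X 0):] * X = [:int (nat \<bar>coeff X 0\<bar>):]"
      proof -
        have "[:sgn x0:] * [:x0:] = [:int (nat \<bar>x0\<bar>):]" for x0 :: int
          by (simp add: mult_to_poly abs_sgn mult.commute) (simp add: sgn_if)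
        then show ?thesis using Xc by metis
      qed
      ultimately show ?thesis using x0 by (intro exI[of _ "nat \<bar>coeff X 0\<bar>"]) auto
    qed
    have prm: "\<forall>p. prime p \<longrightarrow> (\<exists>f\<in>I. \<exists>k. \<not> p dvd coeff f k)"
    proof (intro allI impI, rule ccontr)
      fix p :: int assume p: "prime p" and H: "\<not> (\<exists>f\<in>I. \<exists>k. \<not> p dvd coeff f k)"
      have "p * c dvd z" if "z \<in> C" for z
      proof -
        obtain s k where sk: "s \<in> S" "z = coeff (Wi s) k" using \<open>z \<in> C\<close> by (auto simp: C_def)
        then have "p dvd coeff (Ui s) k" using H Uin by blast
        then show ?thesis using sk WU by (simp add: mult.commute mult_dvd_mono)
      qed
      then have "p * c dvd c" unfolding c_def by (intro Gcd_greatest) auto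
      then have "p * c dvd 1 * c" by simp
      then have "p dvd 1" using dvd_times_right_cancel_iff[OF c0] by blast
      then show False using p not_prime_unit by blast
    qed
    obtain n where n: "[:int n:] \<in> I" "n > 0" using nconst by blast
    have "\<exists>R. finite R \<and> (\<forall>x. \<exists>r\<in>R. x - r \<in> I)"
      using finite_index_aux[of n, rule_format, of I] n I prm by simp
    then obtain R where R: "finite R" "\<forall>x. \<exists>r\<in>R. x - r \<in> I" by blast
    have Msub: "M \<subseteq> zspan {g}"
    proof
      fix x assume "x \<in> M"
      then obtain f where f: "\<forall>s\<in>S. f s \<in> intpolys" "x = (\<Sum>s\<in>S. f s * s)"
        unfolding S(2) zspan_def by blast
      have "x = (\<Sum>s\<in>S. f s * ip (Ui s)) * g"
        unfolding f(2) sum_distrib_right by (intro sum.cong) (simp_all add: sg algebra_simps)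
      moreover have "(\<Sum>s\<in>S. f s * ip (Ui s)) \<in> intpolys"
        using f(1) by (intro ip_sum_in ip_mult_in) auto
      ultimately show "x \<in> zspan {g}" unfolding zspan_single by blast
    qed
    have fq: "finite_quot (zspan {g}) M"
    proof (rule cover_fq[OF Mz finite_imageI[OF R(1), of "\<lambda>r. ip r * g"]], intro ballI)
      fix y assume "y \<in> zspan {g}"
      then obtain f where f: "f \<in> intpolys" "y = f * g" unfolding zspan_single by blast
      then obtain F0 where F0: "f = ip F0" by (auto elim: intpolysE)
      obtain r where r: "r \<in> R" "F0 - r \<in> I" using R(2) by blast
      then obtain H where H: "F0 - r = (\<Sum>s\<in>S. H s * Ui s)" unfolding I_def by blast
      have "y - ip r * g = ip (F0 - r) * g" by (simp add: f F0 ip_diff algebra_simps)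
      also have "\<dots> = (\<Sum>s\<in>S. ip (H s) * s)"
        unfolding H ip_sum sum_distrib_right
      proof (intro sum.cong refl)
        fix s assume sS: "s \<in> S"
        have "ip (H s) * s = ip (H s) * (g * ip (Ui s))" using sg[OF sS] by (rule arg_cong)
        then show "ip (H s * Ui s) * g = ip (H s) * s" by (simp add: ip_mult ac_simps) metis
      qed
      also have "\<dots> \<in> M" unfolding S(2) zspan_def by (intro CollectI exI[of _ "\<lambda>s. ip (H s)"]) simp
      finally show "\<exists>r'\<in>(\<lambda>r. ip r * g) ` R. y - r' \<in> M" using r(1) by blast
    qed
    have "saturation M = zspan {g}"
    proof
      show "zspan {g} \<subseteq> saturation M" using sat_sup[OF zsub_single Msub fq] .
    next
      show "saturation M \<subseteq> zspan {g}"
      proof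
        fix x assume xs: "x \<in> saturation M"
        obtain k :: nat where k: "k > 0" "smult (of_nat k) x \<in> M" using intmult[OF xs] by blast
        then obtain a1 where a1: "smult (of_nat k) x = a1 * g"
          using Msub unfolding zspan_single by blast
        define y where "y = smult (1 / of_nat k) a1"
        have "x = smult (1 / of_nat k) (smult (of_nat k) x)" using k(1) by simp
        also have "\<dots> = y * g" unfolding y_def a1 by simp
        finally have xy: "x = y * g" .
        obtain i j where ij: "i < j" "(monom 1 j - monom 1 i) * x \<in> M" using monmult[OF xs] by blast
        then obtain a2 where a2: "(monom 1 j - monom 1 i) * x = a2 * g" "a2 \<in> intpolys"
          using Msub unfolding zspan_single by blast
        define P :: "rat poly" where "P = monom 1 j - monom 1 i"
        have "(P * y) * g = a2 * g" using a2(1) xy by (simp add: P_def mult.assoc)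
        then have Py: "P * y \<in> intpolys" using g0 a2(2) by simp
        have Pin: "P \<in> intpolys" unfolding P_def by (intro ip_diff_in ip_monom_in) auto
        have "degree P \<le> j" unfolding P_def
          by (intro degree_diff_le) (auto intro: degree_monom_le order_trans[OF _ less_imp_le[OF ij(1)]])
        moreover have "coeff P j = 1" using ij(1) by (simp add: P_def coeff_monom)
        ultimately have "lead_coeff P = 1" by (metis le_antisym le_degree one_neq_zero)
        then have "y \<in> intpolys" using monic_int_div Pin Py by blast
        then show "x \<in> zspan {g}" unfolding zspan_single using xy by blast
      qed
    qed
    then show ?thesis by blast
  qed
qed

end
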